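(* Let $X$ be a complex Banach space and let $1\leq p<q\leq\infty$. Then $\Pi^{\mathcal{B}}_p(\mathbb{D},X)\subseteq\Pi^{\mathcal{B}}_q(\mathbb{D},X)$ and $\pi^{\mathcal{B}}_q(f)\leq\pi^{\mathcal{B}}_p(f)$ for all $f\in\Pi^{\mathcal{B}}_p(\mathbb{D},X)$. Moreover, $\Pi^{\mathcal{B}}_\infty(\mathbb{D},X)=\mathcal{B}(\mathbb{D},X)$ and $\pi^{\mathcal{B}}_\infty(f)=p_{\mathcal{B}}(f)$ for all $f\in\Pi^{\mathcal{B}}_\infty(\mathbb{D},X)$.
   Context: $\mathbb{D}=\{z\in\mathbb{C}:|z|<1\}$. For a complex Banach space $X$, $\mathcal{H}(\mathbb{D},X)$ is the space of holomorphic maps $\mathbb{D}\to X$. For $f\in\mathcal{H}(\mathbb{D},X)$ let $p_{\mathcal{B}}(f)=\sup_{z\in\mathbb{D}}(1-|z|^2)\|f'(z)\|$; $\mathcal{B}(\mathbb{D},X)$ is the space of $f\in\mathcal{H}(\mathbb{D},X)$ with $p_{\mathcal{B}}(f)<\infty$, and $\widehat{\mathcal{B}}(\mathbb{D},X)=\{f\in\mathcal{B}(\mathbb{D},X): f(0)=0\}$, a Banach space with norm $p_{\mathcal{B}}$. Write $\widehat{\mathcal{B}}(\mathbb{D})=\widehat{\mathcal{B}}(\mathbb{D},\mathbb{C})$ and $B_{\widehat{\mathcal{B}}(\mathbb{D})}$ for its closed unit ball. For $1\leq p<\infty$, a map $f\in\mathcal{H}(\mathbb{D},X)$ is called $p$-summing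 Bloch if there is $c\geq0$ such that for all $n\in\mathbb{N}$, $\lambda_1,\dots,\lambda_n\in\mathbb{C}$, $z_1,\dots,z_n\in\mathbb{D}$: $\left(\sum_{i=1}^n|\lambda_i|^p\|f'(z_i)\|^p\right)^{1/p}\leq c\sup_{g\in B_{\widehat{\mathcal{B}}(\mathbb{D})}}\left(\sum_{i=1}^n|\lambda_i|^p|g'(z_i)|^p\right)^{1/p}$; for $p=\infty$ the condition is $\max_{i}|\lambda_i|\|f'(z_i)\|\leq c\sup_{g\in B_{\widehat{\mathcal{B}}(\mathbb{D})}}\max_i|\lambda_i||g'(z_i)|$. The least such $c$ is denoted $\pi^{\mathcal{B}}_p(f)$, and $\Pi^{\mathcal{B}}_p(\mathbb{D},X)$ denotes the space of all $p$-summing Bloch maps $\mathbb{D}\to X$. *)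

theory Defs
  imports "HOL-Analysis.Analysis"
begin

class complex_banach = banach +
  fixes cscale :: "complex \<Rightarrow> 'a \<Rightarrow> 'a"  (infixr \<open>*\<^sub>C\<close> 75)
  assumes cscale_add_right: "a *\<^sub>C (x + y) = a *\<^sub>C x + a *\<^sub>C y"
    and cscale_add_left: "(a + b) *\<^sub>C x = a *\<^sub>C x + b *\<^sub>C x"
    and cscale_cscale: "a *\<^sub>C (b *\<^sub>C x) = (a * b) *\<^sub>C x"
    and cscale_one: "1 *\<^sub>C x = x"
    and cscale_of_real: "(complex_of_real r) *\<^sub>C x = r *\<^sub>R x"
    and norm_cscale: "norm (a *\<^sub>C x) = cmod a * norm x"

instantiation complex :: complex_banach
begin
definition cscale_complex :: "complex \<Rightarrow> complex \<Rightarrow> complex" where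
  "cscale_complex a x = a * x"
instance
  by standard (auto simp: cscale_complex_def algebra_simps norm_mult scaleR_conv_of_real)
end

definition unit_disc :: "complex set" where
  "unit_disc = ball 0 1"

definition has_cderiv :: "(complex \<Rightarrow> 'a::complex_banach) \<Rightarrow> 'a \<Rightarrow> complex \<Rightarrow> bool" where
  "has_cderiv f D z \<longleftrightarrow> (f has_derivative (\<lambda>h. h *\<^sub>C D)) (at z)"

definition cder :: "(complex \<Rightarrow> 'a::complex_banach) \<Rightarrow> complex \<Rightarrow> 'a" where
  "cder f z = (SOME D. has_cderiv f D z)"

definition holo_disc :: "(complex \<Rightarrow> 'a::complex_banach) \<Rightarrow> bool" where
  "holo_disc f \<longleftrightarrow> (\<forall>z\<in>unit_disc. \<exists>D. has_cderiv f D z)"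

definition bloch_norm :: "(complex \<Rightarrow> 'a::complex_banach) \<Rightarrow> real" where
  "bloch_norm f = (SUP z\<in>unit_disc. (1 - (cmod z)\<^sup>2) * norm (cder f z))"

definition bloch_space :: "(complex \<Rightarrow> 'a::complex_banach) set" where
  "bloch_space = {f. holo_disc f \<and>
      bdd_above ((\<lambda>z. (1 - (cmod z)\<^sup>2) * norm (cder f z)) ` unit_disc)}"

definition bloch_hat_ball :: "(complex \<Rightarrow> complex) set" where
  "bloch_hat_ball = {g. g \<in> bloch_space \<and> g 0 = 0 \<and> bloch_norm g \<le> 1}"

text \<open>The \<open>\<ell>_p\<close> norm of \<open>(a_0,\<dots>,a_{n-1})\<close> (nonnegative entries), \<open>1 \<le> p \<le> \<infinity>\<close>.\<close>
definition lp_fin :: "ereal \<Rightarrow> nat \<Rightarrow> (nat \<Rightarrow> real) \<Rightarrow> real" where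
  "lp_fin p n a = (if p = \<infinity> then Max (insert 0 (a ` {..<n}))
     else (\<Sum>i<n. a i powr real_of_ereal p) powr (1 / real_of_ereal p))"

definition psum_const :: "ereal \<Rightarrow> (complex \<Rightarrow> 'a::complex_banach) \<Rightarrow> real \<Rightarrow> bool" where
  "psum_const p f c \<longleftrightarrow> c \<ge> 0 \<and>
     (\<forall>n (lam :: nat \<Rightarrow> complex) (z :: nat \<Rightarrow> complex). (\<forall>i<n. z i \<in> unit_disc) \<longrightarrow>
        lp_fin p n (\<lambda>i. cmod (lam i) * norm (cder f (z i)))
          \<le> c * (SUP g\<in>bloch_hat_ball. lp_fin p n (\<lambda>i. cmod (lam i) * cmod (cder g (z i)))))"

definition Pi_bloch :: "ereal \<Rightarrow> (complex \<Rightarrow> 'a::complex_banach) set" where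
  "Pi_bloch p = {f. holo_disc f \<and> (\<exists>c. psum_const p f c)}"

definition pi_bloch :: "ereal \<Rightarrow> (complex \<Rightarrow> 'a::complex_banach) \<Rightarrow> real" where
  "pi_bloch p f = Inf {c. psum_const p f c}"

end

theory Submission
  imports Defs
begin

lemma cder_eq:
  assumes "has_cderiv f D z" shows "cder f z = D"
proof -
  have "has_cderiv f (cder f z) z" unfolding cder_def using assms by (rule someI)
  then have "(\<lambda>h. h *\<^sub>C cder f z) = (\<lambda>h. h *\<^sub>C D)"
    using assms unfolding has_cderiv_def by (rule has_derivative_unique)
  then have "1 *\<^sub>C cder f z = 1 *\<^sub>C D" by metis
  then show ?thesis by (simp add: cscale_one)
qed

lemma has_cderiv_complex:
  "has_cderiv (g::complex\<Rightarrow>complex) D z \<longleftrightarrow> (g has_field_derivative D) (at z)"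
proof -
  have "(\<lambda>h. h *\<^sub>C D) = (*) D" by (auto simp: cscale_complex_def mult.commute)
  then show ?thesis by (simp add: has_cderiv_def has_field_derivative_def)
qed

lemma disc_pos: "z \<in> unit_disc \<Longrightarrow> 0 < 1 - (cmod z)\<^sup>2"
  by (simp add: unit_disc_def abs_square_less_1)

lemma ball_bound:
  assumes "g \<in> bloch_hat_ball" "z \<in> unit_disc"
  shows "cmod (cder g z) \<le> 1 / (1 - (cmod z)\<^sup>2)"
proof -
  have b: "bdd_above ((\<lambda>z. (1 - (cmod z)\<^sup>2) * norm (cder g z)) ` unit_disc)"
    and n: "bloch_norm g \<le> 1"
    using assms(1) by (auto simp: bloch_hat_ball_def bloch_space_def)
  have "(1 - (cmod z)\<^sup>2) * cmod (cder g z) \<le> bloch_norm g"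
    unfolding bloch_norm_def using b assms(2) by (rule cSUP_upper2) auto
  with n disc_pos[OF assms(2)] show ?thesis
    by (simp add: field_simps)
qed

lemma key_ineq:
  fixes a w :: complex
  assumes "cmod a < 1" "cmod w < 1"
  shows "(1 - (cmod w)\<^sup>2) * (1 - (cmod a)\<^sup>2) \<le> (cmod (1 - cnj a * w))\<^sup>2"
proof -
  have "1 - cmod a * cmod w \<le> cmod (1 - cnj a * w)"
    using norm_triangle_ineq2[of 1 "cnj a * w"] by (simp add: norm_mult)
  moreover have "0 \<le> 1 - cmod a * cmod w"
    using assms by (smt (verit) mult_le_one norm_ge_zero)
  ultimately have "(1 - cmod a * cmod w)\<^sup>2 \<le> (cmod (1 - cnj a * w))\<^sup>2"
    by (simp add: power_mono)
  moreover have "(1 - (cmod w)\<^sup>2) * (1 - (cmod a)\<^sup>2) \<le> (1 - cmod a * cmod w)\<^sup>2"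
    using sum_squares_ge_zero[of "cmod a - cmod w" 0]
    by (simp add: power2_eq_square algebra_simps)
  ultimately show ?thesis by linarith
qed

lemma extremal:
  assumes a: "a \<in> unit_disc"
  shows "\<exists>g\<in>bloch_hat_ball. cmod (cder g a) = 1 / (1 - (cmod a)\<^sup>2)"
proof -
  have am: "cmod a < 1" using a by (simp add: unit_disc_def)
  define k where "k = complex_of_real (1 - (cmod a)\<^sup>2)"
  have apos: "0 < 1 - (cmod a)\<^sup>2" using disc_pos[OF a] .
  have ka: "cmod k = 1 - (cmod a)\<^sup>2" unfolding k_def norm_of_real using apos by simp
  define g where "g w = k * w / (1 - cnj a * w)" for w
  have nz: "1 - cnj a * w \<noteq> 0" if "cmod w < 1" for w
  proof
    assume "1 - cnj a * w = 0"
    then have "cmod (cnj a * w) = 1" by (metis eq_iff_diff_eq_0 norm_one)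
    moreover have "cmod (cnj a * w) < 1"
      using am that by (simp add: norm_mult) (smt (verit) mult_le_one mult_less_cancel_right1 norm_ge_zero)
    ultimately show False by simp
  qed
  have der_raw: "(g has_field_derivative k / (1 - cnj a * w)\<^sup>2) (at w)" if w: "cmod w < 1" for w
  proof -
    have d1: "((\<lambda>w. k*w) has_field_derivative k) (at w)" using DERIV_cmult_Id .
    have d2: "((\<lambda>w. 1 - cnj a * w) has_field_derivative - cnj a) (at w)"
      by (auto intro!: derivative_eq_intros)
    have "((\<lambda>w. k*w / (1 - cnj a * w)) has_field_derivative
       (k * (1 - cnj a * w) - k * w * (- cnj a)) / ((1 - cnj a * w) * (1 - cnj a * w))) (at w)"
      by (rule DERIV_divide[OF d1 d2 nz[OF w]])
    moreover have "(k * (1 - cnj a * w) - k * w * (- cnj a)) / ((1 - cnj a * w) * (1 - cnj a * w))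
        = k / (1 - cnj a * w)\<^sup>2" by (simp add: algebra_simps power2_eq_square)
    moreover have "g = (\<lambda>w. k*w / (1 - cnj a * w))" by (simp add: fun_eq_iff g_def)
    ultimately show ?thesis by simp
  qed
  have der: "cder g w = k / (1 - cnj a * w)\<^sup>2" if "w \<in> unit_disc" for w
  proof -
    have w: "cmod w < 1" using that by (simp add: unit_disc_def)
    show ?thesis using der_raw[OF w] by (intro cder_eq) (simp add: has_cderiv_complex)
  qed
  have hol: "holo_disc g"
  proof -
    have "has_cderiv g (k / (1 - cnj a * w)\<^sup>2) w" if "w \<in> unit_disc" for w
    proof -
      have w: "cmod w < 1" using that by (simp add: unit_disc_def)
      have "(g has_field_derivative k / (1 - cnj a * w)\<^sup>2) (at w)"
        using der_raw w by blast
      then show ?thesis by (simp add: has_cderiv_complex)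
    qed
    then show ?thesis unfolding holo_disc_def by blast
  qed
  have bnd: "(1 - (cmod w)\<^sup>2) * cmod (cder g w) \<le> 1" if "w \<in> unit_disc" for w
  proof -
    have w: "cmod w < 1" using that by (simp add: unit_disc_def)
    have pos: "0 < (cmod (1 - cnj a * w))\<^sup>2" using nz[OF w] by simp
    have "(1 - (cmod w)\<^sup>2) * cmod (cder g w) = (1 - (cmod w)\<^sup>2) * (1 - (cmod a)\<^sup>2) / (cmod (1 - cnj a * w))\<^sup>2"
      using der[OF that] ka by (simp add: norm_divide norm_power)
    also have "\<dots> \<le> 1" using key_ineq[OF am w] pos by simp
    finally show ?thesis .
  qed
  have bs: "g \<in> bloch_space" unfolding bloch_space_def using hol bnd
    by (auto intro!: bdd_aboveI2)
  have "bloch_norm g \<le> 1" unfolding bloch_norm_def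
    by (rule cSUP_least) (auto simp: unit_disc_def bnd)
  then have gb: "g \<in> bloch_hat_ball" using bs by (simp add: bloch_hat_ball_def g_def)
  have "cder g a = k / (1 - cnj a * a)\<^sup>2" using der[OF a] .
  also have "1 - cnj a * a = k"
    by (metis complex_norm_square mult.commute of_real_1 of_real_diff k_def)
  finally have "cder g a = k / k\<^sup>2" .
  moreover have "k \<noteq> 0" using ka apos by auto
  ultimately have "cder g a = 1 / k" by (simp add: power2_eq_square)
  then have "cmod (cder g a) = 1 / (1 - (cmod a)\<^sup>2)"
    by (simp add: norm_divide ka)
  with gb show ?thesis by blast
qed

lemma lp_fin_fin: "lp_fin (ereal r) n a = (\<Sum>i<n. a i powr r) powr (1/r)"
  by (simp add: lp_fin_def)

lemma lp_fin_inf: "lp_fin \<infinity> n a = Max (insert 0 (a ` {..<n}))"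
  by (simp add: lp_fin_def)

lemma lp_nonneg: "0 \<le> lp_fin p n a"
  by (auto simp: lp_fin_def intro: Max_ge)

lemma lp_one: assumes "r \<noteq> 0" "0 \<le> x" shows "lp_fin (ereal r) 1 (\<lambda>i. x) = x"
  using assms by (simp add: lp_fin_def powr_powr powr_one)

lemma ball_nonempty: "bloch_hat_ball \<noteq> {}"
  using extremal[of 0] by (auto simp: unit_disc_def)

lemma sup_bdd:
  assumes "1 \<le> p" "\<forall>i<n. z i \<in> unit_disc"
  shows "bdd_above ((\<lambda>g. lp_fin p n (\<lambda>i. cmod (lam i) * cmod (cder g (z i)))) ` bloch_hat_ball)"
proof -
  define B where "B i = cmod (lam i) * (1 / (1 - (cmod (z i))\<^sup>2))" for i
  have le: "cmod (lam i) * cmod (cder g (z i)) \<le> B i" if "g \<in> bloch_hat_ball" "i < n" for g i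
  proof -
    have h: "cmod (cder g (z i)) \<le> 1 / (1 - (cmod (z i))\<^sup>2)"
      using ball_bound[OF that(1)] assms(2) that(2) by blast
    show ?thesis unfolding B_def by (rule mult_left_mono[OF h]) simp
  qed
  show ?thesis
  proof (cases p)
    case (real r)
    with assms have r: "r \<ge> 1" by simp
    show ?thesis
    proof (rule bdd_aboveI2)
      fix g assume g: "g \<in> bloch_hat_ball"
      have "(\<Sum>i<n. (cmod (lam i) * cmod (cder g (z i))) powr r) \<le> (\<Sum>i<n. B i powr r)"
        using le[OF g] r by (intro sum_mono powr_mono2) auto
      then show "lp_fin p n (\<lambda>i. cmod (lam i) * cmod (cder g (z i))) \<le> lp_fin (ereal r) n B"
        unfolding real lp_fin_fin using r by (intro powr_mono2) (auto intro: sum_nonneg)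
    qed
  next
    case PInf
    show ?thesis
    proof (rule bdd_aboveI2)
      fix g assume g: "g \<in> bloch_hat_ball"
      have Bnn: "0 \<le> B i" if "i < n" for i
        using le[OF g that] by (meson mult_nonneg_nonneg norm_ge_zero order_trans)
      show "lp_fin p n (\<lambda>i. cmod (lam i) * cmod (cder g (z i))) \<le> (\<Sum>i<n. B i)"
        unfolding PInf lp_fin_inf
      proof (subst Max_le_iff, simp, simp, safe)
        show "0 \<le> (\<Sum>i<n. B i)" using Bnn by (intro sum_nonneg) auto
        fix i assume i: "i < n"
        have "B i \<le> (\<Sum>i<n. B i)" using Bnn i by (intro member_le_sum) auto
        then show "cmod (lam i) * cmod (cder g (z i)) \<le> (\<Sum>i<n. B i)" using le[OF g i] by linarith
      qed
    qed
  next
    case MInf with assms show ?thesis by simp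
  qed
qed

lemma sup_nonneg:
  "0 \<le> (SUP g\<in>bloch_hat_ball. lp_fin p n (a g))" if "bdd_above ((\<lambda>g. lp_fin p n (a g)) ` bloch_hat_ball)"
proof -
  obtain g0 where "g0 \<in> bloch_hat_ball" using ball_nonempty by blast
  then show ?thesis using that by (intro cSUP_upper2[where x=g0]) (auto simp: lp_nonneg)
qed

lemma holder:
  fixes x y :: "nat \<Rightarrow> real"
  assumes x: "\<And>i. i < n \<Longrightarrow> 0 \<le> x i" and y: "\<And>i. i < n \<Longrightarrow> 0 \<le> y i"
    and ab: "0 < \<alpha>" "0 < \<beta>" "\<alpha> + \<beta> = 1"
  shows "(\<Sum>i<n. x i powr \<alpha> * y i powr \<beta>) \<le> (\<Sum>i<n. x i) powr \<alpha> * (\<Sum>i<n. y i) powr \<beta>"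
proof -
  define X where "X = (\<Sum>i<n. x i)"
  define Y where "Y = (\<Sum>i<n. y i)"
  have X0: "0 \<le> X" "0 \<le> Y" unfolding X_def Y_def using x y by (auto intro: sum_nonneg)
  show ?thesis
  proof (cases "X = 0 \<or> Y = 0")
    case True
    then have "(\<forall>i<n. x i = 0) \<or> (\<forall>i<n. y i = 0)"
      unfolding X_def Y_def using x y by (subst (asm) (1 2) sum_nonneg_eq_0_iff) auto
    then have "(\<Sum>i<n. x i powr \<alpha> * y i powr \<beta>) = 0" by auto
    then show ?thesis by simp
  next
    case False
    then have XP: "0 < X" "0 < Y" using X0 by auto
    have each: "x i powr \<alpha> * y i powr \<beta> \<le> X powr \<alpha> * Y powr \<beta> * (\<alpha> * (x i / X) + \<beta> * (y i / Y))"
      if i: "i < n" for i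
    proof (cases "x i = 0 \<or> y i = 0")
      case True
      have "0 \<le> X powr \<alpha> * Y powr \<beta> * (\<alpha> * (x i / X) + \<beta> * (y i / Y))"
        using XP x[OF i] y[OF i] ab by (intro mult_nonneg_nonneg add_nonneg_nonneg) auto
      then show ?thesis using True by auto
    next
      case False
      then have p: "0 < x i / X" "0 < y i / Y" using x[OF i] y[OF i] XP by auto
      have "(x i / X) powr \<alpha> * (y i / Y) powr \<beta> \<le> \<alpha> * (x i / X) + \<beta> * (y i / Y)"
        using Youngs_inequality_0[OF _ _ ab(3) p] ab by simp
      moreover have "(x i / X) powr \<alpha> * (y i / Y) powr \<beta> = x i powr \<alpha> * y i powr \<beta> / (X powr \<alpha> * Y powr \<beta>)"
        by (simp add: powr_divide)
      moreover have "0 < X powr \<alpha> * Y powr \<beta>" using XP by simp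
      ultimately show ?thesis by (simp add: divide_le_eq mult.commute)
    qed
    have "(\<Sum>i<n. x i powr \<alpha> * y i powr \<beta>) \<le> (\<Sum>i<n. X powr \<alpha> * Y powr \<beta> * (\<alpha> * (x i / X) + \<beta> * (y i / Y)))"
      using each by (intro sum_mono) auto
    also have "\<dots> = X powr \<alpha> * Y powr \<beta> * (\<alpha> * (\<Sum>i<n. x i) / X + \<beta> * (\<Sum>i<n. y i) / Y)"
      by (simp add: sum_distrib_left sum.distrib sum_divide_distrib[symmetric] algebra_simps)
    also have "\<dots> = X powr \<alpha> * Y powr \<beta>" using XP ab by (simp add: X_def[symmetric] Y_def[symmetric])
    finally show ?thesis by (simp add: X_def Y_def)
  qed
qed

lemma incl_fin:
  fixes p q :: real
  assumes pq: "1 \<le> p" "p < q" and P: "psum_const (ereal p) f c"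
  shows "psum_const (ereal q) f c"
  unfolding psum_const_def
proof (intro conjI allI impI)
  show c0: "0 \<le> c" using P by (simp add: psum_const_def)
  fix n and lam z :: "nat \<Rightarrow> complex"
  assume zin: "\<forall>i<n. z i \<in> unit_disc"
  define a where "a i = cmod (lam i) * norm (cder f (z i))" for i
  define A where "A = (\<Sum>i<n. a i powr q)"
  define mu where "mu i = complex_of_real (a i powr ((q-p)/p)) * lam i" for i
  define b where "b g i = cmod (lam i) * cmod (cder g (z i))" for g i
  define Sq where "Sq = (SUP g\<in>bloch_hat_ball. lp_fin (ereal q) n (b g))"
  have a0: "0 \<le> a i" for i by (simp add: a_def)
  have b0: "0 \<le> b g i" for g i by (simp add: b_def)
  have A0: "0 \<le> A" unfolding A_def by (simp add: sum_nonneg)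
  have p0: "0 < p" "0 < q" "p \<noteq> 0" "q \<noteq> 0" using pq by auto
  have bddq: "bdd_above ((\<lambda>g. lp_fin (ereal q) n (b g)) ` bloch_hat_ball)"
    unfolding b_def using sup_bdd[of "ereal q" n z lam] pq zin by simp
  have Sq0: "0 \<le> Sq" unfolding Sq_def using sup_nonneg[OF bddq] .
  have mua: "cmod (mu i) * norm (cder f (z i)) = a i powr (q/p)" for i
  proof -
    have gen: "cmod (mu i) * norm (cder f (z i)) = a i powr ((q-p)/p) * a i"
      by (simp add: mu_def a_def norm_mult mult.assoc)
    show ?thesis
    proof (cases "a i = 0")
      case True then show ?thesis using gen by simp
    next
      case False
      then have "0 < a i" using a0 le_less by metis
      then have "a i powr ((q-p)/p) * a i = a i powr ((q-p)/p + 1)" by (simp add: powr_add)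
      also have "(q-p)/p + 1 = q/p" using p0 by (simp add: field_simps)
      finally show ?thesis using gen by simp
    qed
  qed
  have h1: "lp_fin (ereal p) n (\<lambda>i. cmod (mu i) * norm (cder f (z i))) = A powr (1/p)"
    unfolding lp_fin_fin mua A_def using p0 by (simp add: powr_powr)
  have h2: "lp_fin (ereal p) n (\<lambda>i. cmod (mu i) * cmod (cder g (z i)))
       \<le> A powr ((q-p)/(p*q)) * lp_fin (ereal q) n (b g)" if g: "g \<in> bloch_hat_ball" for g
  proof -
    define Bg where "Bg = (\<Sum>i<n. b g i powr q)"
    have Bg0: "0 \<le> Bg" unfolding Bg_def by (simp add: sum_nonneg)
    have trm: "(cmod (mu i) * cmod (cder g (z i))) powr p
        = (a i powr q) powr ((q-p)/q) * (b g i powr q) powr (p/q)" for i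
    proof -
      have "(cmod (mu i) * cmod (cder g (z i))) powr p = (a i powr ((q-p)/p) * b g i) powr p"
        by (simp add: mu_def b_def norm_mult mult.assoc)
      also have "\<dots> = a i powr (q-p) * b g i powr p"
        using p0 by (simp add: powr_mult powr_powr mult.commute)
      also have "\<dots> = (a i powr q) powr ((q-p)/q) * (b g i powr q) powr (p/q)"
        using p0 by (simp add: powr_powr)
      finally show ?thesis .
    qed
    have "(\<Sum>i<n. (cmod (mu i) * cmod (cder g (z i))) powr p) \<le> A powr ((q-p)/q) * Bg powr (p/q)"
      unfolding trm A_def Bg_def using pq
      by (intro holder) (auto simp: field_simps)
    then have "(\<Sum>i<n. (cmod (mu i) * cmod (cder g (z i))) powr p) powr (1/p)
        \<le> (A powr ((q-p)/q) * Bg powr (p/q)) powr (1/p)"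
      using p0 by (intro powr_mono2) (auto simp: sum_nonneg)
    also have "\<dots> = A powr ((q-p)/(p*q)) * Bg powr (1/q)"
      using p0 by (simp add: powr_mult powr_powr mult.commute)
    finally show ?thesis unfolding lp_fin_fin Bg_def by simp
  qed
  have bddp: "bdd_above ((\<lambda>g. lp_fin (ereal p) n (\<lambda>i. cmod (mu i) * cmod (cder g (z i)))) ` bloch_hat_ball)"
    using sup_bdd[of "ereal p" n z mu] pq zin by simp
  have h3: "(SUP g\<in>bloch_hat_ball. lp_fin (ereal p) n (\<lambda>i. cmod (mu i) * cmod (cder g (z i))))
      \<le> A powr ((q-p)/(p*q)) * Sq"
  proof (rule cSUP_least[OF ball_nonempty])
    fix g assume g: "g \<in> bloch_hat_ball"
    have "lp_fin (ereal q) n (b g) \<le> Sq" unfolding Sq_def using g bddq by (rule cSUP_upper)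
    then show "lp_fin (ereal p) n (\<lambda>i. cmod (mu i) * cmod (cder g (z i))) \<le> A powr ((q-p)/(p*q)) * Sq"
      using h2[OF g] by (meson mult_left_mono order_trans powr_ge_zero)
  qed
  have "A powr (1/p) \<le> c * (SUP g\<in>bloch_hat_ball. lp_fin (ereal p) n (\<lambda>i. cmod (mu i) * cmod (cder g (z i))))"
    using P zin unfolding psum_const_def h1[symmetric] by blast
  also have "\<dots> \<le> c * (A powr ((q-p)/(p*q)) * Sq)" using h3 c0 by (rule mult_left_mono)
  finally have main: "A powr (1/p) \<le> A powr ((q-p)/(p*q)) * (c * Sq)" by (simp add: ac_simps)
  have split: "A powr (1/p) = A powr ((q-p)/(p*q)) * A powr (1/q)"
  proof -
    have "1/p = (q-p)/(p*q) + 1/q" using p0 by (simp add: field_simps)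
    then show ?thesis by (simp add: powr_add)
  qed
  have goal: "A powr (1/q) \<le> c * Sq"
  proof (cases "A = 0")
    case True then show ?thesis using c0 Sq0 by simp
  next
    case False
    then have "0 < A powr ((q-p)/(p*q))" using A0 by simp
    then show ?thesis using main split by (simp add: mult_le_cancel_left_pos)
  qed
  show "lp_fin (ereal q) n (\<lambda>i. cmod (lam i) * norm (cder f (z i)))
        \<le> c * (SUP g\<in>bloch_hat_ball. lp_fin (ereal q) n (\<lambda>i. cmod (lam i) * cmod (cder g (z i))))"
    using goal unfolding lp_fin_fin A_def Sq_def a_def b_def by simp
qed

lemma psum_apply:
  assumes "psum_const p f c" "\<forall>i<n. z i \<in> unit_disc"
  shows "lp_fin p n (\<lambda>i. cmod (lam i) * norm (cder f (z i)))
     \<le> c * (SUP g\<in>bloch_hat_ball. lp_fin p n (\<lambda>i. cmod (lam i) * cmod (cder g (z i))))"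
  using assms unfolding psum_const_def by blast

lemma lp_inf_le:
  assumes "\<And>i. i < n \<Longrightarrow> a i \<le> M" "0 \<le> M"
  shows "lp_fin \<infinity> n a \<le> M"
  unfolding lp_fin_inf using assms by (subst Max_le_iff) auto

lemma lp_inf_ge:
  assumes "i < n" shows "a i \<le> lp_fin \<infinity> n a"
  unfolding lp_fin_inf using assms by (intro Max_ge) auto

lemma incl_inf:
  fixes p :: real
  assumes p: "1 \<le> p" and P: "psum_const (ereal p) f c"
  shows "psum_const \<infinity> f c"
  unfolding psum_const_def
proof (intro conjI allI impI)
  show c0: "0 \<le> c" using P by (simp add: psum_const_def)
  fix n and lam z :: "nat \<Rightarrow> complex"
  assume zin: "\<forall>i<n. z i \<in> unit_disc"
  define S where "S = (SUP g\<in>bloch_hat_ball. lp_fin \<infinity> n (\<lambda>i. cmod (lam i) * cmod (cder g (z i))))"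
  have bdd: "bdd_above ((\<lambda>g. lp_fin \<infinity> n (\<lambda>i. cmod (lam i) * cmod (cder g (z i)))) ` bloch_hat_ball)"
    using sup_bdd[of \<infinity> n z lam] zin by simp
  have S0: "0 \<le> S" unfolding S_def using sup_nonneg[OF bdd] .
  show "lp_fin \<infinity> n (\<lambda>i. cmod (lam i) * norm (cder f (z i))) \<le> c * S"
  proof (rule lp_inf_le)
    show "0 \<le> c * S" using c0 S0 by simp
    fix i assume i: "i < n"
    have zi: "\<forall>j<1. (\<lambda>_. z i) j \<in> unit_disc" using zin i by simp
    have A1: "lp_fin (ereal p) 1 (\<lambda>j. cmod (lam i) * norm (cder f (z i)))
        \<le> c * (SUP g\<in>bloch_hat_ball. lp_fin (ereal p) 1 (\<lambda>j. cmod (lam i) * cmod (cder g (z i))))"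
      using psum_apply[OF P zi, of "\<lambda>_. lam i"] by simp
    have A2: "(SUP g\<in>bloch_hat_ball. lp_fin (ereal p) 1 (\<lambda>j. cmod (lam i) * cmod (cder g (z i)))) \<le> S"
      unfolding S_def
    proof (rule cSUP_mono[OF ball_nonempty bdd])
      fix g assume g: "g \<in> bloch_hat_ball"
      have "lp_fin (ereal p) 1 (\<lambda>j. cmod (lam i) * cmod (cder g (z i))) = cmod (lam i) * cmod (cder g (z i))"
        using p by (intro lp_one) auto
      also have "\<dots> \<le> lp_fin \<infinity> n (\<lambda>i. cmod (lam i) * cmod (cder g (z i)))"
        using lp_inf_ge[OF i, of "\<lambda>i. cmod (lam i) * cmod (cder g (z i))"] by simp
      finally show "\<exists>m\<in>bloch_hat_ball. lp_fin (ereal p) 1 (\<lambda>j. cmod (lam i) * cmod (cder g (z i)))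
          \<le> lp_fin \<infinity> n (\<lambda>i. cmod (lam i) * cmod (cder m (z i)))" using g by blast
    qed
    have A3: "lp_fin (ereal p) 1 (\<lambda>j. cmod (lam i) * norm (cder f (z i))) = cmod (lam i) * norm (cder f (z i))"
      using p by (intro lp_one) auto
    have A4: "c * (SUP g\<in>bloch_hat_ball. lp_fin (ereal p) 1 (\<lambda>j. cmod (lam i) * cmod (cder g (z i)))) \<le> c * S"
      using A2 c0 by (rule mult_left_mono)
    show "cmod (lam i) * norm (cder f (z i)) \<le> c * S"
      using A1 A4 unfolding A3 by linarith
  qed
qed

lemma incl:
  assumes "1 \<le> p" "p < q" "psum_const p f c"
  shows "psum_const q f c"
proof -
  obtain r where r: "p = ereal r" using assms by (cases p) auto
  show ?thesis
  proof (cases q)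
    case (real s) then show ?thesis using assms r incl_fin[of r s f c] by simp
  next
    case PInf then show ?thesis using assms r incl_inf[of r f c] by simp
  next
    case MInf then show ?thesis using assms by simp
  qed
qed

lemma psum_inf_bound:
  assumes P: "psum_const \<infinity> f c" and z: "z \<in> unit_disc"
  shows "(1 - (cmod z)\<^sup>2) * norm (cder f z) \<le> c"
proof -
  have zi: "\<forall>j<1. (\<lambda>_. z) j \<in> unit_disc" using z by simp
  have "lp_fin \<infinity> 1 (\<lambda>j. cmod 1 * norm (cder f z))
      \<le> c * (SUP g\<in>bloch_hat_ball. lp_fin \<infinity> 1 (\<lambda>j. cmod 1 * cmod (cder g z)))"
    using psum_apply[OF P zi, of "\<lambda>_. 1"] by simp
  moreover have "lp_fin \<infinity> 1 (\<lambda>j. cmod 1 * norm (cder f z)) = norm (cder f z)"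
    by (simp add: lp_fin_inf lessThan_Suc)
  moreover have "(SUP g\<in>bloch_hat_ball. lp_fin \<infinity> 1 (\<lambda>j. cmod 1 * cmod (cder g z))) \<le> 1 / (1 - (cmod z)\<^sup>2)"
  proof (rule cSUP_least[OF ball_nonempty])
    fix g assume g: "g \<in> bloch_hat_ball"
    show "lp_fin \<infinity> 1 (\<lambda>j. cmod 1 * cmod (cder g z)) \<le> 1 / (1 - (cmod z)\<^sup>2)"
      using ball_bound[OF g z] disc_pos[OF z] by (simp add: lp_fin_inf lessThan_Suc)
  qed
  moreover have "0 \<le> c" using P by (simp add: psum_const_def)
  ultimately have "norm (cder f z) \<le> c * (1 / (1 - (cmod z)\<^sup>2))"
    using mult_left_mono[of "SUP g\<in>bloch_hat_ball. lp_fin \<infinity> 1 (\<lambda>j. cmod 1 * cmod (cder g z))"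
      "1 / (1 - (cmod z)\<^sup>2)" c] by linarith
  then show ?thesis using disc_pos[OF z] by (simp add: field_simps)
qed

lemma bloch_norm_nonneg:
  assumes "f \<in> bloch_space" shows "0 \<le> bloch_norm f"
proof -
  have "0 \<in> unit_disc" by (simp add: unit_disc_def)
  then show ?thesis unfolding bloch_norm_def
    using assms by (intro cSUP_upper2[where x=0]) (auto simp: bloch_space_def)
qed

lemma bloch_le:
  assumes "f \<in> bloch_space" "z \<in> unit_disc"
  shows "(1 - (cmod z)\<^sup>2) * norm (cder f z) \<le> bloch_norm f"
  unfolding bloch_norm_def using assms(2)
  by (rule cSUP_upper) (use assms(1) in \<open>simp add: bloch_space_def\<close>)

lemma bloch_psum_inf:
  assumes f: "f \<in> bloch_space"
  shows "psum_const \<infinity> f (bloch_norm f)"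
  unfolding psum_const_def
proof (intro conjI allI impI)
  show c0: "0 \<le> bloch_norm f" using bloch_norm_nonneg[OF f] .
  fix n and lam z :: "nat \<Rightarrow> complex"
  assume zin: "\<forall>i<n. z i \<in> unit_disc"
  define S where "S = (SUP g\<in>bloch_hat_ball. lp_fin \<infinity> n (\<lambda>i. cmod (lam i) * cmod (cder g (z i))))"
  have bdd: "bdd_above ((\<lambda>g. lp_fin \<infinity> n (\<lambda>i. cmod (lam i) * cmod (cder g (z i)))) ` bloch_hat_ball)"
    using sup_bdd[of \<infinity> n z lam] zin by simp
  have S0: "0 \<le> S" unfolding S_def using sup_nonneg[OF bdd] .
  show "lp_fin \<infinity> n (\<lambda>i. cmod (lam i) * norm (cder f (z i))) \<le> bloch_norm f * S"
  proof (rule lp_inf_le)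
    show "0 \<le> bloch_norm f * S" using c0 S0 by simp
    fix i assume i: "i < n"
    have zi: "z i \<in> unit_disc" using zin i by simp
    obtain g where g: "g \<in> bloch_hat_ball" and gd: "cmod (cder g (z i)) = 1 / (1 - (cmod (z i))\<^sup>2)"
      using extremal[OF zi] by blast
    have nf: "norm (cder f (z i)) \<le> bloch_norm f * (1 / (1 - (cmod (z i))\<^sup>2))"
      using bloch_le[OF f zi] disc_pos[OF zi] by (simp add: field_simps)
    have "cmod (lam i) * norm (cder f (z i)) \<le> bloch_norm f * (cmod (lam i) * cmod (cder g (z i)))"
      unfolding gd using mult_left_mono[OF nf norm_ge_zero[of "lam i"]] by (simp add: ac_simps)
    also have "cmod (lam i) * cmod (cder g (z i)) \<le> S"
    proof -
      have "cmod (lam i) * cmod (cder g (z i)) \<le> lp_fin \<infinity> n (\<lambda>i. cmod (lam i) * cmod (cder g (z i)))"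
        using lp_inf_ge[OF i, of "\<lambda>i. cmod (lam i) * cmod (cder g (z i))"] by simp
      also have "\<dots> \<le> S" unfolding S_def using g bdd by (rule cSUP_upper)
      finally show ?thesis .
    qed
    then have "bloch_norm f * (cmod (lam i) * cmod (cder g (z i))) \<le> bloch_norm f * S"
      using c0 by (rule mult_left_mono)
    finally show "cmod (lam i) * norm (cder f (z i)) \<le> bloch_norm f * S" .
  qed
qed

theorem proposition1p1:
  fixes p q :: ereal
  assumes "1 \<le> p" and "p < q"
  shows "(Pi_bloch p :: (complex \<Rightarrow> 'a::complex_banach) set) \<subseteq> Pi_bloch q
    \<and> (\<forall>f \<in> (Pi_bloch p :: (complex \<Rightarrow> 'a) set). pi_bloch q f \<le> pi_bloch p f)
    \<and> (Pi_bloch \<infinity> :: (complex \<Rightarrow> 'a) set) = bloch_space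
    \<and> (\<forall>f \<in> (Pi_bloch \<infinity> :: (complex \<Rightarrow> 'a) set). pi_bloch \<infinity> f = bloch_norm f)"
proof (intro conjI ballI)
  show "(Pi_bloch p :: (complex \<Rightarrow> 'a) set) \<subseteq> Pi_bloch q"
    unfolding Pi_bloch_def using incl[OF assms] by blast
next
  fix f :: "complex \<Rightarrow> 'a" assume f: "f \<in> Pi_bloch p"
  show "pi_bloch q f \<le> pi_bloch p f" unfolding pi_bloch_def
  proof (rule cInf_superset_mono)
    show "{c. psum_const p f c} \<noteq> {}" using f by (auto simp: Pi_bloch_def)
    show "bdd_below {c. psum_const q f c}" by (rule bdd_belowI[where m=0]) (auto simp: psum_const_def)
    show "{c. psum_const p f c} \<subseteq> {c. psum_const q f c}" using incl[OF assms] by blast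
  qed
next
  show "(Pi_bloch \<infinity> :: (complex \<Rightarrow> 'a) set) = bloch_space"
  proof
    show "(Pi_bloch \<infinity> :: (complex \<Rightarrow> 'a) set) \<subseteq> bloch_space"
    proof
      fix f :: "complex \<Rightarrow> 'a" assume "f \<in> Pi_bloch \<infinity>"
      then obtain c where h: "holo_disc f" and P: "psum_const \<infinity> f c" by (auto simp: Pi_bloch_def)
      show "f \<in> bloch_space" unfolding bloch_space_def
        using h psum_inf_bound[OF P] by (auto intro!: bdd_aboveI2)
    qed
    show "bloch_space \<subseteq> (Pi_bloch \<infinity> :: (complex \<Rightarrow> 'a) set)"
      using bloch_psum_inf by (auto simp: Pi_bloch_def bloch_space_def)
  qed
next
  fix f :: "complex \<Rightarrow> 'a" assume f: "f \<in> Pi_bloch \<infinity>"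
  then obtain c where h: "holo_disc f" and P: "psum_const \<infinity> f c" by (auto simp: Pi_bloch_def)
  have fb: "f \<in> bloch_space" unfolding bloch_space_def
    using h psum_inf_bound[OF P] by (auto intro!: bdd_aboveI2)
  show "pi_bloch \<infinity> f = bloch_norm f" unfolding pi_bloch_def
  proof (rule cInf_eq_minimum)
    show "bloch_norm f \<in> {c. psum_const \<infinity> f c}" using bloch_psum_inf[OF fb] by simp
    fix c assume "c \<in> {c. psum_const \<infinity> f c}"
    then have Pc: "psum_const \<infinity> f c" by simp
    show "bloch_norm f \<le> c" unfolding bloch_norm_def
      by (rule cSUP_least) (auto simp: unit_disc_def intro: psum_inf_bound[OF Pc])
  qed
qed

end
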